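(* Let $A\| B$ be a right D2 extension and $\mathcal E=\mathrm{End}({}_BA)$. Then $\Psi:A\otimes_BA\to\mathrm{Hom}(\mathcal E_A,A_A)$, $\Psi(a\otimes a')(f)=af(a')$, is an isomorphism of left $B$-modules, with inverse $F\mapsto\sum_jF(\gamma_j)u_j^1\otimes u_j^2$ for any right D2 quasibase $\gamma_j,u_j$. Here $\mathcal E$ is a right $A$-module via $(f\cdot a)(x)=f(x)a$, and $\mathrm{Hom}(\mathcal E_A,A_A)$ is a left $B$-module via $(bF)(f)=bF(f)$.
   Context: Algebras over a commutative ring $K$; $A\| B$ a unit-preserving algebra homomorphism $B\to A$; $S=\mathrm{End}({}_BA_B)$; $T=(A\otimes_BA)^B$ with Sweedler notation $t=t^1\otimes t^2$. $A\| B$ is right D2 if $A\otimes_BA$ is isomorphic as an $A$-$B$-bimodule to a direct summand of some $A^n$; equivalently there are finitely many $\gamma_j\in S,u_j\in T$ with $a\otimes_Ba'=\sum_ja\gamma_j(a')u_j^1\otimes u_j^2$ for all $a,a'$ (right D2 quasibase). *)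

theory Defs
  imports Main "HOL-Library.Poly_Mapping"
begin

text \<open>Algebras are rendered as (not necessarily commutative) rings with unit;
 the extension A | B is a unit preserving ring homomorphism beta : B -> A.\<close>

definition ring_hom_1 :: "('b::ring_1 \<Rightarrow> 'a::ring_1) \<Rightarrow> bool" where
  "ring_hom_1 \<beta> \<longleftrightarrow> \<beta> 1 = 1 \<and> (\<forall>x y. \<beta> (x + y) = \<beta> x + \<beta> y)
      \<and> (\<forall>x y. \<beta> (x * y) = \<beta> x * \<beta> y)"

text \<open>A representative of an element is a list of pairs
 [(x1,y1),...,(xk,yk)] standing for the sum of the simple tensors xi \<otimes> yi
 (every element has such a representative, since -(x\<otimes>y) = (-x)\<otimes>y).
 Two representatives are equal in A \<otimes>_B A iff their difference in the free
 abelian group on A \<times> A lies in the subgroup generated by the bilinearity and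
 B-balancedness relators.\<close>

definition simple_t :: "'a \<Rightarrow> 'a \<Rightarrow> ('a \<times> 'a \<Rightarrow>\<^sub>0 int)" where
  "simple_t x y = Poly_Mapping.single (x, y) 1"

definition free_t :: "('a \<times> 'a) list \<Rightarrow> ('a \<times> 'a \<Rightarrow>\<^sub>0 int)" where
  "free_t u = sum_list (map (\<lambda>(x, y). simple_t x y) u)"

inductive_set tensor_kernel :: "('b::ring_1 \<Rightarrow> 'a::ring_1) \<Rightarrow> ('a \<times> 'a \<Rightarrow>\<^sub>0 int) set"
  for \<beta> where
  zero: "0 \<in> tensor_kernel \<beta>"
| diff: "p \<in> tensor_kernel \<beta> \<Longrightarrow> q \<in> tensor_kernel \<beta> \<Longrightarrow> p - q \<in> tensor_kernel \<beta>"
| addl: "simple_t (x + x') y - simple_t x y - simple_t x' y \<in> tensor_kernel \<beta>"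
| addr: "simple_t x (y + y') - simple_t x y - simple_t x y' \<in> tensor_kernel \<beta>"
| bal:  "simple_t (x * \<beta> b) y - simple_t x (\<beta> b * y) \<in> tensor_kernel \<beta>"

definition teq :: "('b::ring_1 \<Rightarrow> 'a::ring_1) \<Rightarrow> ('a \<times> 'a) list \<Rightarrow> ('a \<times> 'a) list \<Rightarrow> bool" where
  "teq \<beta> u v \<longleftrightarrow> free_t u - free_t v \<in> tensor_kernel \<beta>"

definition tlmul :: "'a::ring_1 \<Rightarrow> ('a \<times> 'a) list \<Rightarrow> ('a \<times> 'a) list" where
  "tlmul a u = map (\<lambda>(x, y). (a * x, y)) u"

definition trmul :: "('a \<times> 'a) list \<Rightarrow> 'a::ring_1 \<Rightarrow> ('a \<times> 'a) list" where
  "trmul u a = map (\<lambda>(x, y). (x, y * a)) u"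

definition End_lB :: "('b::ring_1 \<Rightarrow> 'a::ring_1) \<Rightarrow> ('a \<Rightarrow> 'a) set" where
  "End_lB \<beta> = {f. (\<forall>x y. f (x + y) = f x + f y) \<and> (\<forall>b x. f (\<beta> b * x) = \<beta> b * f x)}"

definition End_BB :: "('b::ring_1 \<Rightarrow> 'a::ring_1) \<Rightarrow> ('a \<Rightarrow> 'a) set" where
  "End_BB \<beta> = {f. f \<in> End_lB \<beta> \<and> (\<forall>b x. f (x * \<beta> b) = f x * \<beta> b)}"

definition Tcent :: "('b::ring_1 \<Rightarrow> 'a::ring_1) \<Rightarrow> ('a \<times> 'a) list set" where
  "Tcent \<beta> = {u. \<forall>b. teq \<beta> (tlmul (\<beta> b) u) (trmul u (\<beta> b))}"

definition qb_sum :: "nat \<Rightarrow> (nat \<Rightarrow> 'a \<Rightarrow> 'a) \<Rightarrow> (nat \<Rightarrow> ('a \<times> 'a) list)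
     \<Rightarrow> (nat \<Rightarrow> 'a::ring_1) \<Rightarrow> ('a \<times> 'a) list" where
  "qb_sum n \<gamma> u c = concat (map (\<lambda>j. tlmul (c j) (u j)) [0..<n])"

definition right_D2_quasibase :: "('b::ring_1 \<Rightarrow> 'a::ring_1) \<Rightarrow> nat \<Rightarrow> (nat \<Rightarrow> 'a \<Rightarrow> 'a)
     \<Rightarrow> (nat \<Rightarrow> ('a \<times> 'a) list) \<Rightarrow> bool" where
  "right_D2_quasibase \<beta> n \<gamma> u \<longleftrightarrow>
     (\<forall>j<n. \<gamma> j \<in> End_BB \<beta> \<and> u j \<in> Tcent \<beta>) \<and>
     (\<forall>a a'. teq \<beta> [(a, a')] (qb_sum n \<gamma> u (\<lambda>j. a * \<gamma> j a')))"

text \<open>Right D2: A \<otimes>_B A is isomorphic, as an A-B-bimodule, to a direct summand of A^n,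
 i.e. there is a bimodule map p : A \<otimes>_B A -> A^n with a bimodule retraction i.
 Elements of A^n are functions nat -> A vanishing at indices >= n.\<close>
definition right_D2 :: "('b::ring_1 \<Rightarrow> 'a::ring_1) \<Rightarrow> bool" where
  "right_D2 \<beta> \<longleftrightarrow> (\<exists>(n::nat) (p :: ('a \<times> 'a) list \<Rightarrow> nat \<Rightarrow> 'a) (i :: (nat \<Rightarrow> 'a) \<Rightarrow> ('a \<times> 'a) list).
      (\<forall>u v. teq \<beta> u v \<longrightarrow> p u = p v) \<and>
      (\<forall>u k. n \<le> k \<longrightarrow> p u k = 0) \<and>
      (\<forall>u v. p (u @ v) = (\<lambda>k. p u k + p v k)) \<and>
      (\<forall>a u. p (tlmul a u) = (\<lambda>k. a * p u k)) \<and>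
      (\<forall>b u. p (trmul u (\<beta> b)) = (\<lambda>k. p u k * \<beta> b)) \<and>
      (\<forall>v w. (\<forall>k\<ge>n. v k = 0) \<longrightarrow> (\<forall>k\<ge>n. w k = 0) \<longrightarrow>
          teq \<beta> (i (\<lambda>k. v k + w k)) (i v @ i w)) \<and>
      (\<forall>a v. (\<forall>k\<ge>n. v k = 0) \<longrightarrow> teq \<beta> (i (\<lambda>k. a * v k)) (tlmul a (i v))) \<and>
      (\<forall>b v. (\<forall>k\<ge>n. v k = 0) \<longrightarrow> teq \<beta> (i (\<lambda>k. v k * \<beta> b)) (trmul (i v) (\<beta> b))) \<and>
      (\<forall>u. teq \<beta> (i (p u)) u))"

text \<open>Hom(E_A, A_A): additive maps F : E -> A with F(f.a) = F(f) a, where (f.a)(x) = f(x) a.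
 Such maps are only considered on E (values outside E are irrelevant).\<close>
definition HomEA :: "('b::ring_1 \<Rightarrow> 'a::ring_1) \<Rightarrow> (('a \<Rightarrow> 'a) \<Rightarrow> 'a) set" where
  "HomEA \<beta> = {F. (\<forall>f\<in>End_lB \<beta>. \<forall>g\<in>End_lB \<beta>. F (\<lambda>x. f x + g x) = F f + F g) \<and>
                  (\<forall>f\<in>End_lB \<beta>. \<forall>a. F (\<lambda>x. f x * a) = F f * a)}"

definition Psi :: "('a::ring_1 \<times> 'a) list \<Rightarrow> ('a \<Rightarrow> 'a) \<Rightarrow> 'a" where
  "Psi u f = sum_list (map (\<lambda>(x, y). x * f y) u)"

end

theory Submission
  imports Defs
begin


definition Lf :: "('a \<times> 'a \<Rightarrow> 'c::ring_1) \<Rightarrow> ('a \<times> 'a \<Rightarrow>\<^sub>0 int) \<Rightarrow> 'c" where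
  "Lf g p = (\<Sum>k\<in>Poly_Mapping.keys p. of_int (Poly_Mapping.lookup p k) * g k)"

lemma Lf_eq: "finite S \<Longrightarrow> Poly_Mapping.keys p \<subseteq> S \<Longrightarrow> Lf g p = (\<Sum>k\<in>S. of_int (Poly_Mapping.lookup p k) * g k)"
  unfolding Lf_def by (rule sum.mono_neutral_left) (auto simp: in_keys_iff)

lemma Lf_diff: "Lf g (p - q) = Lf g p - Lf g q"
proof -
  let ?S = "Poly_Mapping.keys p \<union> Poly_Mapping.keys q"
  have "Lf g (p - q) = (\<Sum>k\<in>?S. of_int (Poly_Mapping.lookup (p - q) k) * g k)"
    using keys_diff[of p q] by (intro Lf_eq) auto
  also have "\<dots> = (\<Sum>k\<in>?S. of_int (Poly_Mapping.lookup p k) * g k) - (\<Sum>k\<in>?S. of_int (Poly_Mapping.lookup q k) * g k)"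
    by (simp add: lookup_minus left_diff_distrib sum_subtractf)
  also have "\<dots> = Lf g p - Lf g q" by (simp add: Lf_eq[of ?S p g] Lf_eq[of ?S q g])
  finally show ?thesis .
qed

lemma Lf_add: "Lf g (p + q) = Lf g p + Lf g q"
proof -
  let ?S = "Poly_Mapping.keys p \<union> Poly_Mapping.keys q"
  have "Lf g (p + q) = (\<Sum>k\<in>?S. of_int (Poly_Mapping.lookup (p + q) k) * g k)"
    using keys_add[of p q] by (intro Lf_eq) auto
  also have "\<dots> = (\<Sum>k\<in>?S. of_int (Poly_Mapping.lookup p k) * g k) + (\<Sum>k\<in>?S. of_int (Poly_Mapping.lookup q k) * g k)"
    by (simp add: lookup_add distrib_right sum.distrib)
  also have "\<dots> = Lf g p + Lf g q" by (simp add: Lf_eq[of ?S p g] Lf_eq[of ?S q g])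
  finally show ?thesis .
qed

lemma Lf_zero: "Lf g 0 = 0" by (simp add: Lf_def)

lemma Lf_simple: "Lf g (simple_t x y) = g (x, y)"
  by (simp add: Lf_def simple_t_def)

lemma free_t_Nil[simp]: "free_t [] = 0" by (simp add: free_t_def)
lemma free_t_Cons[simp]: "free_t ((x,y)#u) = simple_t x y + free_t u" by (simp add: free_t_def)
lemma free_t_append[simp]: "free_t (u @ v) = free_t u + free_t v" by (simp add: free_t_def)

lemma Psi_Nil[simp]: "Psi [] f = 0" by (simp add: Psi_def)
lemma Psi_Cons[simp]: "Psi ((x,y)#u) f = x * f y + Psi u f" by (simp add: Psi_def)
lemma Psi_append[simp]: "Psi (u @ v) f = Psi u f + Psi v f" by (simp add: Psi_def)

lemma Lf_free_t: "Lf (\<lambda>(x,y). x * f y) (free_t u) = Psi u f"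
  by (induction u) (auto simp: Lf_zero Lf_add Lf_simple)

lemma Lf_kernel:
  assumes "p \<in> tensor_kernel \<beta>" "f \<in> End_lB \<beta>"
  shows "Lf (\<lambda>(x,y). x * f y) p = 0"
  using assms(1)
proof induction
  case zero then show ?case by (simp add: Lf_zero)
next
  case (diff p q) then show ?case by (simp add: Lf_diff)
next
  case (addl x x' y) then show ?case by (simp add: Lf_diff Lf_simple distrib_right)
next
  case (addr x y y') then show ?case using assms(2)
    by (simp add: Lf_diff Lf_simple distrib_left End_lB_def)
next
  case (bal x b y) then show ?case using assms(2)
    by (simp add: Lf_diff Lf_simple End_lB_def mult.assoc)
qed

lemma Psi_welldef: "teq \<beta> u v \<Longrightarrow> f \<in> End_lB \<beta> \<Longrightarrow> Psi u f = Psi v f"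
  using Lf_kernel[of "free_t u - free_t v" \<beta> f]
  by (simp add: teq_def Lf_diff Lf_free_t)

lemma K_neg: "p \<in> tensor_kernel \<beta> \<Longrightarrow> - p \<in> tensor_kernel \<beta>"
  using tensor_kernel.diff[OF tensor_kernel.zero, of p \<beta>] by simp

lemma K_add: "p \<in> tensor_kernel \<beta> \<Longrightarrow> q \<in> tensor_kernel \<beta> \<Longrightarrow> p + q \<in> tensor_kernel \<beta>"
  using tensor_kernel.diff[of p \<beta> "-q"] K_neg by fastforce

lemma teq_refl: "teq \<beta> u u" by (simp add: teq_def tensor_kernel.zero)

lemma teq_sym: "teq \<beta> u v \<Longrightarrow> teq \<beta> v u"
  unfolding teq_def using K_neg by fastforce

lemma teq_trans: "teq \<beta> u v \<Longrightarrow> teq \<beta> v w \<Longrightarrow> teq \<beta> u w"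
  unfolding teq_def using K_add by fastforce

lemma teq_append: "teq \<beta> u u' \<Longrightarrow> teq \<beta> v v' \<Longrightarrow> teq \<beta> (u @ v) (u' @ v')"
  unfolding teq_def
proof -
  assume a: "free_t u - free_t u' \<in> tensor_kernel \<beta>" "free_t v - free_t v' \<in> tensor_kernel \<beta>"
  have "free_t (u @ v) - free_t (u' @ v') = (free_t u - free_t u') + (free_t v - free_t v')"
    by (simp add: algebra_simps)
  then show "free_t (u @ v) - free_t (u' @ v') \<in> tensor_kernel \<beta>" using K_add[OF a] by argo
qed

lemma teq_zero_l: "teq \<beta> [(0,y)] []"
proof -
  have "simple_t (0 + 0) y - simple_t 0 y - simple_t 0 y \<in> tensor_kernel \<beta>"
    by (rule tensor_kernel.addl)
  then have "- simple_t 0 y \<in> tensor_kernel \<beta>" by simp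
  from K_neg[OF this] show ?thesis by (simp add: teq_def)
qed

lemma tlmul_Nil[simp]: "tlmul a [] = []" by (simp add: tlmul_def)
lemma tlmul_Cons[simp]: "tlmul a ((x,y)#w) = (a*x,y) # tlmul a w" by (simp add: tlmul_def)
lemma tlmul_append[simp]: "tlmul a (u@v) = tlmul a u @ tlmul a v" by (simp add: tlmul_def)

lemma tlmul_zero: "teq \<beta> (tlmul 0 w) []"
proof (induction w)
  case Nil then show ?case by (simp add: teq_refl)
next
  case (Cons p w)
  obtain x y where p: "p = (x,y)" by fastforce
  have "teq \<beta> ([(0,y)] @ tlmul 0 w) ([] @ [])"
    by (rule teq_append[OF teq_zero_l Cons.IH])
  then show ?case by (simp add: p)
qed

lemma tlmul_add: "teq \<beta> (tlmul (c1 + c2) w) (tlmul c1 w @ tlmul c2 w)"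
proof (induction w)
  case Nil then show ?case by (simp add: teq_refl)
next
  case (Cons p w)
  obtain x y where p: "p = (x,y)" by fastforce
  have k: "simple_t (c1*x + c2*x) y - simple_t (c1*x) y - simple_t (c2*x) y \<in> tensor_kernel \<beta>"
    by (rule tensor_kernel.addl)
  have "free_t (tlmul (c1 + c2) (p#w)) - free_t (tlmul c1 (p#w) @ tlmul c2 (p#w)) =
     (simple_t (c1*x + c2*x) y - simple_t (c1*x) y - simple_t (c2*x) y) +
     (free_t (tlmul (c1 + c2) w) - free_t (tlmul c1 w @ tlmul c2 w))"
    by (simp add: p distrib_right algebra_simps)
  then show ?case using K_add[OF k Cons.IH[unfolded teq_def]] by (simp add: teq_def)
qed

lemma Psi_tlmul: "Psi (tlmul c u) f = c * Psi u f"
  by (induction u) (auto simp: distrib_left mult.assoc)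

lemma qb_sum_0[simp]: "qb_sum 0 \<gamma> u c = []" by (simp add: qb_sum_def)
lemma qb_sum_Suc[simp]: "qb_sum (Suc n) \<gamma> u c = qb_sum n \<gamma> u c @ tlmul (c n) (u n)"
  by (simp add: qb_sum_def)

lemma Psi_qb_sum: "Psi (qb_sum n \<gamma> u c) f = (\<Sum>j<n. c j * Psi (u j) f)"
  by (induction n) (auto simp: Psi_tlmul)



lemma teq_cong_r: "teq \<beta> u v \<Longrightarrow> free_t v = free_t w \<Longrightarrow> teq \<beta> u w"
  by (simp add: teq_def)

lemma qb_sum_add: "teq \<beta> (qb_sum n \<gamma> u (\<lambda>j. c1 j + c2 j)) (qb_sum n \<gamma> u c1 @ qb_sum n \<gamma> u c2)"
proof (induction n)
  case 0 then show ?case by (simp add: teq_refl)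
next
  case (Suc n)
  have A: "teq \<beta> (qb_sum n \<gamma> u (\<lambda>j. c1 j + c2 j) @ tlmul (c1 n + c2 n) (u n))
     ((qb_sum n \<gamma> u c1 @ qb_sum n \<gamma> u c2) @ (tlmul (c1 n) (u n) @ tlmul (c2 n) (u n)))"
    by (rule teq_append[OF Suc.IH tlmul_add])
  have B: "free_t ((qb_sum n \<gamma> u c1 @ qb_sum n \<gamma> u c2) @ (tlmul (c1 n) (u n) @ tlmul (c2 n) (u n)))
     = free_t (qb_sum (Suc n) \<gamma> u c1 @ qb_sum (Suc n) \<gamma> u c2)"
    by (simp add: algebra_simps)
  show ?case unfolding qb_sum_Suc[of n \<gamma> u "\<lambda>j. c1 j + c2 j"]
    by (rule teq_cong_r[OF A B])
qed

lemma qb_sum_zero: "teq \<beta> (qb_sum n \<gamma> u (\<lambda>j. 0)) []"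
proof (induction n)
  case 0 then show ?case by (simp add: teq_refl)
next
  case (Suc n)
  show ?case using teq_append[OF Suc.IH tlmul_zero[of \<beta> "u n"]] by simp
qed

lemma qb_inverse2:
  assumes "right_D2_quasibase \<beta> n \<gamma> u"
  shows "teq \<beta> (qb_sum n \<gamma> u (\<lambda>j. Psi t (\<gamma> j))) t"
proof (induction t)
  case Nil then show ?case using qb_sum_zero by simp
next
  case (Cons p t)
  obtain x y where p: "p = (x,y)" by fastforce
  have q: "teq \<beta> [(x, y)] (qb_sum n \<gamma> u (\<lambda>j. x * \<gamma> j y))"
    using assms by (simp add: right_D2_quasibase_def)
  have a: "teq \<beta> (qb_sum n \<gamma> u (\<lambda>j. x * \<gamma> j y + Psi t (\<gamma> j)))
      (qb_sum n \<gamma> u (\<lambda>j. x * \<gamma> j y) @ qb_sum n \<gamma> u (\<lambda>j. Psi t (\<gamma> j)))"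
    by (rule qb_sum_add)
  have b: "teq \<beta> (qb_sum n \<gamma> u (\<lambda>j. x * \<gamma> j y) @ qb_sum n \<gamma> u (\<lambda>j. Psi t (\<gamma> j)))
      ([(x,y)] @ t)"
    by (rule teq_append[OF teq_sym[OF q] Cons.IH])
  show ?case using teq_trans[OF a b] by (simp add: p)
qed

lemma End_lB_zero: "(\<lambda>x. 0) \<in> End_lB \<beta>" by (simp add: End_lB_def)

lemma End_lB_rmul: "g \<in> End_lB \<beta> \<Longrightarrow> (\<lambda>x. g x * c) \<in> End_lB \<beta>"
  by (simp add: End_lB_def distrib_right mult.assoc)

lemma End_lB_add: "g \<in> End_lB \<beta> \<Longrightarrow> h \<in> End_lB \<beta> \<Longrightarrow> (\<lambda>x. g x + h x) \<in> End_lB \<beta>"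
  by (simp add: End_lB_def distrib_left add_ac)

lemma HomEA_zero: "F \<in> HomEA \<beta> \<Longrightarrow> F (\<lambda>x. 0) = 0"
proof -
  assume "F \<in> HomEA \<beta>"
  then have h: "\<forall>f\<in>End_lB \<beta>. \<forall>a. F (\<lambda>x. f x * a) = F f * a" by (simp add: HomEA_def)
  from h[rule_format, OF End_lB_zero, of 0] show ?thesis by simp
qed

lemma qb_inverse1:
  assumes qb: "right_D2_quasibase \<beta> n \<gamma> u" and F: "F \<in> HomEA \<beta>" and f: "f \<in> End_lB \<beta>"
  shows "Psi (qb_sum n \<gamma> u (\<lambda>j. F (\<gamma> j))) f = F f"
proof -
  have Fadd: "\<forall>f\<in>End_lB \<beta>. \<forall>g\<in>End_lB \<beta>. F (\<lambda>x. f x + g x) = F f + F g"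
   and Fmul: "\<forall>f\<in>End_lB \<beta>. \<forall>a. F (\<lambda>x. f x * a) = F f * a" using F by (simp_all add: HomEA_def)
  define c where "c j = Psi (u j) f" for j
  have gE: "\<gamma> j \<in> End_lB \<beta>" if "j < n" for j
    using qb that by (simp add: right_D2_quasibase_def End_BB_def)
  have feq: "f = (\<lambda>x. \<Sum>j<n. \<gamma> j x * c j)"
  proof
    fix x
    have "teq \<beta> [(1, x)] (qb_sum n \<gamma> u (\<lambda>j. 1 * \<gamma> j x))"
      using qb unfolding right_D2_quasibase_def by blast
    from Psi_welldef[OF this f] show "f x = (\<Sum>j<n. \<gamma> j x * c j)"
      by (simp add: Psi_qb_sum c_def)
  qed
  have "m \<le> n \<Longrightarrow> (\<lambda>x. \<Sum>j<m. \<gamma> j x * c j) \<in> End_lB \<beta> \<and>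
          F (\<lambda>x. \<Sum>j<m. \<gamma> j x * c j) = (\<Sum>j<m. F (\<gamma> j) * c j)" for m
  proof (induction m)
    case 0 then show ?case using F by (simp add: End_lB_zero HomEA_zero)
  next
    case (Suc m)
    then have IH: "(\<lambda>x. \<Sum>j<m. \<gamma> j x * c j) \<in> End_lB \<beta>"
        "F (\<lambda>x. \<Sum>j<m. \<gamma> j x * c j) = (\<Sum>j<m. F (\<gamma> j) * c j)" and mn: "m < n" by auto
    have g: "(\<lambda>x. \<gamma> m x * c m) \<in> End_lB \<beta>" by (rule End_lB_rmul[OF gE[OF mn]])
    have e1: "F (\<lambda>x. (\<Sum>j<m. \<gamma> j x * c j) + \<gamma> m x * c m) =
          F (\<lambda>x. \<Sum>j<m. \<gamma> j x * c j) + F (\<lambda>x. \<gamma> m x * c m)"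
      by (rule Fadd[rule_format, OF IH(1) g])
    have e2: "F (\<lambda>x. \<gamma> m x * c m) = F (\<gamma> m) * c m"
      by (rule Fmul[rule_format, OF gE[OF mn]])
    have s: "(\<lambda>x. \<Sum>j<Suc m. \<gamma> j x * c j) = (\<lambda>x. (\<Sum>j<m. \<gamma> j x * c j) + \<gamma> m x * c m)"
      by simp
    show ?case unfolding s using e1 e2 IH(2) End_lB_add[OF IH(1) g] by simp
  qed
  from this[OF order_refl] have "F (\<lambda>x. \<Sum>j<n. \<gamma> j x * c j) = (\<Sum>j<n. F (\<gamma> j) * c j)" by blast
  then have "F f = (\<Sum>j<n. F (\<gamma> j) * c j)" using feq by simp
  then show ?thesis by (simp add: Psi_qb_sum c_def)
qed



lemma Psi_addf: "Psi u (\<lambda>x. f x + g x) = Psi u f + Psi u g"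
  by (induction u) (auto simp: distrib_left add_ac)

lemma Psi_rmulf: "Psi u (\<lambda>x. f x * a) = Psi u f * a"
  by (induction u) (auto simp: distrib_right mult.assoc)

lemma qb_sum_cong: "(\<And>j. j < n \<Longrightarrow> c j = d j) \<Longrightarrow> qb_sum n \<gamma> u c = qb_sum n \<gamma> u d"
  unfolding qb_sum_def by (intro arg_cong[where f=concat] map_cong) auto

lemma D2_qb:
  fixes \<beta> :: "'b::ring_1 \<Rightarrow> 'a::ring_1"
  assumes D2: "right_D2 \<beta>"
  shows "\<exists>n \<gamma> u. right_D2_quasibase \<beta> n \<gamma> u"
proof -
  from D2 obtain n and p :: "('a \<times> 'a) list \<Rightarrow> nat \<Rightarrow> 'a" and i :: "(nat \<Rightarrow> 'a) \<Rightarrow> ('a \<times> 'a) list" where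
    pt: "\<forall>u v. teq \<beta> u v \<longrightarrow> p u = p v" and
    pz: "\<forall>u k. n \<le> k \<longrightarrow> p u k = 0" and
    pa: "\<forall>u v. p (u @ v) = (\<lambda>k. p u k + p v k)" and
    pl: "\<forall>a u. p (tlmul a u) = (\<lambda>k. a * p u k)" and
    pr: "\<forall>b u. p (trmul u (\<beta> b)) = (\<lambda>k. p u k * \<beta> b)" and
    ia: "\<forall>v w. (\<forall>k\<ge>n. v k = 0) \<longrightarrow> (\<forall>k\<ge>n. w k = 0) \<longrightarrow>
          teq \<beta> (i (\<lambda>k. v k + w k)) (i v @ i w)" and
    il: "\<forall>a v. (\<forall>k\<ge>n. v k = 0) \<longrightarrow> teq \<beta> (i (\<lambda>k. a * v k)) (tlmul a (i v))" and
    ir: "\<forall>b v. (\<forall>k\<ge>n. v k = 0) \<longrightarrow> teq \<beta> (i (\<lambda>k. v k * \<beta> b)) (trmul (i v) (\<beta> b))" and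
    ip: "\<forall>u. teq \<beta> (i (p u)) u"
    unfolding right_D2_def by (elim exE conjE) (rule that; assumption)
  define e :: "nat \<Rightarrow> nat \<Rightarrow> 'a" where "e j = (\<lambda>k. if k = j then 1 else 0)" for j
  define \<gamma> where "\<gamma> j a = p [(1,a)] j" for j a
  define uu where "uu j = i (e j)" for j
  have ev: "\<forall>k\<ge>n. e j k = 0" if "j < n" for j using that by (simp add: e_def)
  have expand: "teq \<beta> (i v) (concat (map (\<lambda>j. tlmul (v j) (uu j)) [0..<n]))"
    if vv: "\<forall>k\<ge>n. v k = 0" for v
  proof -
    have "m \<le> n \<Longrightarrow> teq \<beta> (i (\<lambda>k. if k < m then v k else 0)) (concat (map (\<lambda>j. tlmul (v j) (uu j)) [0..<m]))" for m
    proof (induction m)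
      case 0
      have "teq \<beta> (i (\<lambda>k. 0 * (\<lambda>k. 0) k)) (tlmul 0 (i (\<lambda>k. 0)))"
        using il[rule_format, of "\<lambda>k. 0" 0] by simp
      then have "teq \<beta> (i (\<lambda>k. 0)) (tlmul 0 (i (\<lambda>k. 0)))" by simp
      from teq_trans[OF this tlmul_zero] show ?case by simp
    next
      case (Suc m)
      then have IH: "teq \<beta> (i (\<lambda>k. if k < m then v k else 0)) (concat (map (\<lambda>j. tlmul (v j) (uu j)) [0..<m]))"
        and mn: "m < n" by auto
      have z1: "\<forall>k\<ge>n. (if k < m then v k else 0) = 0" using mn by auto
      have z2: "\<forall>k\<ge>n. v m * e m k = 0" using ev[OF mn] by simp
      have a1: "teq \<beta> (i (\<lambda>k. (if k < m then v k else 0) + v m * e m k))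
          (i (\<lambda>k. if k < m then v k else 0) @ i (\<lambda>k. v m * e m k))"
        using ia[rule_format, of "\<lambda>k. if k < m then v k else 0" "\<lambda>k. v m * e m k"] z1 z2 by simp
      have a2: "teq \<beta> (i (\<lambda>k. v m * e m k)) (tlmul (v m) (uu m))"
        unfolding uu_def using il[rule_format, of "e m" "v m"] ev[OF mn] by simp
      have s: "(\<lambda>k. if k < Suc m then v k else 0) = (\<lambda>k. (if k < m then v k else 0) + v m * e m k)"
        by (auto simp: e_def fun_eq_iff less_Suc_eq)
      show ?case unfolding s using teq_trans[OF a1 teq_append[OF IH a2]] by simp
    qed
    from this[OF order_refl] have "teq \<beta> (i (\<lambda>k. if k < n then v k else 0)) (concat (map (\<lambda>j. tlmul (v j) (uu j)) [0..<n]))" .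
    moreover have "(\<lambda>k. if k < n then v k else 0) = v" using vv by (auto simp: fun_eq_iff)
    ultimately show ?thesis by simp
  qed
  have gB: "\<gamma> j \<in> End_BB \<beta>" for j
  proof -
    have add: "\<gamma> j (x + y) = \<gamma> j x + \<gamma> j y" for x y
    proof -
      have "teq \<beta> [(1, x + y)] ([(1,x)] @ [(1,y)])"
        using tensor_kernel.addr[where x=1 and y=x and y'=y and \<beta>=\<beta>] by (simp add: teq_def diff_diff_eq)
      then have "p [(1, x + y)] = p ([(1,x)] @ [(1,y)])" using pt by simp
      then show ?thesis using pa[rule_format, of "[(1,x)]" "[(1,y)]"] by (simp add: \<gamma>_def)
    qed
    have lft: "\<gamma> j (\<beta> b * x) = \<beta> b * \<gamma> j x" for b x
    proof -
      have "teq \<beta> [(1, \<beta> b * x)] (tlmul (\<beta> b) [(1,x)])"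
        using K_neg[OF tensor_kernel.bal[where x=1 and b=b and y=x and \<beta>=\<beta>]] by (simp add: teq_def)
      then have "p [(1, \<beta> b * x)] = p (tlmul (\<beta> b) [(1,x)])" using pt by simp
      then show ?thesis using pl[rule_format, of "\<beta> b" "[(1,x)]"] by (simp add: \<gamma>_def)
    qed
    have rgt: "\<gamma> j (x * \<beta> b) = \<gamma> j x * \<beta> b" for b x
    proof -
      have "p [(1, x * \<beta> b)] = p (trmul [(1,x)] (\<beta> b))" by (simp add: trmul_def)
      then show ?thesis using pr[rule_format, of "[(1,x)]" b] by (simp add: \<gamma>_def)
    qed
    show ?thesis using add lft rgt by (simp add: End_BB_def End_lB_def)
  qed
  have uT: "uu j \<in> Tcent \<beta>" if "j < n" for j
  proof -
    have "teq \<beta> (tlmul (\<beta> b) (uu j)) (trmul (uu j) (\<beta> b))" for b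
    proof -
      have a1: "teq \<beta> (i (\<lambda>k. \<beta> b * e j k)) (tlmul (\<beta> b) (uu j))"
        unfolding uu_def using il[rule_format, of "e j" "\<beta> b"] ev[OF that] by simp
      have a2: "teq \<beta> (i (\<lambda>k. e j k * \<beta> b)) (trmul (uu j) (\<beta> b))"
        unfolding uu_def using ir[rule_format, of "e j" b] ev[OF that] by simp
      have s: "(\<lambda>k. \<beta> b * e j k) = (\<lambda>k. e j k * \<beta> b)" by (auto simp: e_def fun_eq_iff)
      show ?thesis using teq_trans[OF teq_sym[OF a1] a2[folded s]] .
    qed
    then show ?thesis by (simp add: Tcent_def)
  qed
  have eqn: "teq \<beta> [(a, a')] (qb_sum n \<gamma> uu (\<lambda>j. a * \<gamma> j a'))" for a a'
  proof -
    have pv: "p [(a,a')] = (\<lambda>k. a * \<gamma> k a')"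
      using pl[rule_format, of a "[(1,a')]"] by (simp add: \<gamma>_def)
    have vv: "\<forall>k\<ge>n. a * \<gamma> k a' = 0" using pz by (simp add: \<gamma>_def)
    have "teq \<beta> (i (\<lambda>k. a * \<gamma> k a')) [(a,a')]" using ip[rule_format, of "[(a,a')]"] unfolding pv .
    from teq_trans[OF teq_sym[OF this] expand[OF vv]] show ?thesis
      by (simp add: qb_sum_def)
  qed
  have "right_D2_quasibase \<beta> n \<gamma> uu"
    unfolding right_D2_quasibase_def using gB uT eqn by blast
  then show ?thesis by blast
qed

theorem lemma4p3:
  fixes \<beta> :: "'b::ring_1 \<Rightarrow> 'a::ring_1"
  assumes hom: "ring_hom_1 \<beta>"
    and D2: "right_D2 \<beta>"
  shows
    \<comment> \<open>Psi is well defined on A \<otimes>_B A\<close>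
    "(\<forall>u v. teq \<beta> u v \<longrightarrow> (\<forall>f\<in>End_lB \<beta>. Psi u f = Psi v f))
     \<comment> \<open>it lands in Hom(E_A, A_A)\<close>
     \<and> (\<forall>u. Psi u \<in> HomEA \<beta>)
     \<comment> \<open>it is additive and left B-linear\<close>
     \<and> (\<forall>u v. \<forall>f\<in>End_lB \<beta>. Psi (u @ v) f = Psi u f + Psi v f)
     \<and> (\<forall>b u. \<forall>f\<in>End_lB \<beta>. Psi (tlmul (\<beta> b) u) f = \<beta> b * Psi u f)
     \<comment> \<open>it is injective and surjective\<close>
     \<and> (\<forall>u v. (\<forall>f\<in>End_lB \<beta>. Psi u f = Psi v f) \<longrightarrow> teq \<beta> u v)
     \<and> (\<forall>F\<in>HomEA \<beta>. \<exists>u. \<forall>f\<in>End_lB \<beta>. Psi u f = F f)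
     \<comment> \<open>for every right D2 quasibase, F \<mapsto> \<Sum>_j F(gamma_j) u_j is the inverse\<close>
     \<and> (\<forall>n \<gamma> u. right_D2_quasibase \<beta> n \<gamma> u \<longrightarrow>
          (\<forall>F\<in>HomEA \<beta>. \<forall>f\<in>End_lB \<beta>. Psi (qb_sum n \<gamma> u (\<lambda>j. F (\<gamma> j))) f = F f)
        \<and> (\<forall>t. teq \<beta> (qb_sum n \<gamma> u (\<lambda>j. Psi t (\<gamma> j))) t))"
proof -
  obtain n0 \<gamma>0 u0 where qb0: "right_D2_quasibase \<beta> n0 \<gamma>0 u0" using D2_qb[OF D2] by blast
  have g0: "\<gamma>0 j \<in> End_lB \<beta>" if "j < n0" for j
    using qb0 that by (simp add: right_D2_quasibase_def End_BB_def)
  have P1: "\<forall>u v. teq \<beta> u v \<longrightarrow> (\<forall>f\<in>End_lB \<beta>. Psi u f = Psi v f)"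
    using Psi_welldef by blast
  have P2: "\<forall>u. Psi u \<in> HomEA \<beta>"
    by (simp add: HomEA_def Psi_addf Psi_rmulf)
  have P5: "\<forall>u v. (\<forall>f\<in>End_lB \<beta>. Psi u f = Psi v f) \<longrightarrow> teq \<beta> u v"
  proof (intro allI impI)
    fix u v assume h: "\<forall>f\<in>End_lB \<beta>. Psi u f = Psi v f"
    have e: "qb_sum n0 \<gamma>0 u0 (\<lambda>j. Psi u (\<gamma>0 j)) = qb_sum n0 \<gamma>0 u0 (\<lambda>j. Psi v (\<gamma>0 j))"
      by (rule qb_sum_cong) (use h g0 in blast)
    show "teq \<beta> u v"
      using teq_trans[OF teq_sym[OF qb_inverse2[OF qb0, of u]] qb_inverse2[OF qb0, of v, folded e]] .
  qed
  have P6: "\<forall>F\<in>HomEA \<beta>. \<exists>u. \<forall>f\<in>End_lB \<beta>. Psi u f = F f"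
  proof
    fix F assume F: "F \<in> HomEA \<beta>"
    show "\<exists>u. \<forall>f\<in>End_lB \<beta>. Psi u f = F f"
      by (rule exI[of _ "qb_sum n0 \<gamma>0 u0 (\<lambda>j. F (\<gamma>0 j))"]) (use qb_inverse1[OF qb0 F] in blast)
  qed
  have P7: "\<forall>n \<gamma> u. right_D2_quasibase \<beta> n \<gamma> u \<longrightarrow>
          (\<forall>F\<in>HomEA \<beta>. \<forall>f\<in>End_lB \<beta>. Psi (qb_sum n \<gamma> u (\<lambda>j. F (\<gamma> j))) f = F f)
        \<and> (\<forall>t. teq \<beta> (qb_sum n \<gamma> u (\<lambda>j. Psi t (\<gamma> j))) t)"
  proof (intro allI impI conjI ballI)
    fix n \<gamma> u F f t assume q: "right_D2_quasibase \<beta> n \<gamma> u"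
    show "F \<in> HomEA \<beta> \<Longrightarrow> f \<in> End_lB \<beta> \<Longrightarrow> Psi (qb_sum n \<gamma> u (\<lambda>j. F (\<gamma> j))) f = F f"
      by (rule qb_inverse1[OF q])
    show "teq \<beta> (qb_sum n \<gamma> u (\<lambda>j. Psi t (\<gamma> j))) t" by (rule qb_inverse2[OF q])
  qed
  have P3: "\<forall>u v. \<forall>f\<in>End_lB \<beta>. Psi (u @ v) f = Psi u f + Psi v f" by simp
  have P4: "\<forall>b u. \<forall>f\<in>End_lB \<beta>. Psi (tlmul (\<beta> b) u) f = \<beta> b * Psi u f" by (simp add: Psi_tlmul)
  show ?thesis by (intro conjI P1 P2 P3 P4 P5 P6 P7)
qed

end
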